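(* If \[\sum_{n\geq 1}\frac{|\alpha_n|}{p_n}\sup_{j\geq n}\left|\sum_{\ell=n}^j\alpha_\ell\right|<\infty,\] then $\mathrm{Var}(\hat S)<\infty$ and \[\mathrm{Var}(\hat S)=\alpha_0^2 +\sum_{n\geq 1} \frac{\alpha_n^2}{p_n} + 2\sum_{n\geq 1} \alpha_n S_{n-1} -S^2.\] If $\{\alpha_n\}$ is a sequence of nonnegative numbers and $\sum_{n\geq 1} \alpha_n S_{n-1}=\infty$, then $\mathrm{Var}(\hat S)=\infty$.
   Context: Let $S=\sum_{k\geq 0}\alpha_k$ be a series with $\sum_k|\alpha_k|<\infty$. Let $\tau$ be an almost surely finite random time taking nonnegative integer values such that $p_n:=\mathbb{P}(\tau\geq n)>0$ for all $n\geq 0$ (with $p_0=1$), so that $\lim_{n\to\infty}p_n=0$. Define the weighted partial sums $S_0=\alpha_0$ and, for $k\geq 1$, $S_k=\alpha_0+\sum_{j=1}^k \alpha_j/p_j$. The Russian roulette random truncation estimator of $S$ is $\hat S=S_\tau$; it has finite expectation and $\mathbb{E}(\hat S)=S$. *)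

theory Defs
  imports "HOL-Probability.Probability"
begin

definition surv :: "'a measure \<Rightarrow> ('a \<Rightarrow> nat) \<Rightarrow> nat \<Rightarrow> real" where
  "surv M \<tau> n = measure M {\<omega> \<in> space M. \<tau> \<omega> \<ge> n}"

definition wpsum :: "'a measure \<Rightarrow> ('a \<Rightarrow> nat) \<Rightarrow> (nat \<Rightarrow> real) \<Rightarrow> nat \<Rightarrow> real" where
  "wpsum M \<tau> \<alpha> k = \<alpha> 0 + (\<Sum>j=1..k. \<alpha> j / surv M \<tau> j)"

definition rr_est :: "'a measure \<Rightarrow> ('a \<Rightarrow> nat) \<Rightarrow> (nat \<Rightarrow> real) \<Rightarrow> 'a \<Rightarrow> real" where
  "rr_est M \<tau> \<alpha> \<omega> = wpsum M \<tau> \<alpha> (\<tau> \<omega>)"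

definition ext_variance :: "'a measure \<Rightarrow> ('a \<Rightarrow> real) \<Rightarrow> ennreal" where
  "ext_variance M X = (\<integral>\<^sup>+ \<omega>. ennreal ((X \<omega> - integral\<^sup>L M X)\<^sup>2) \<partial>M)"

end

theory Submission imports Defs begin

definition SS :: "(nat \<Rightarrow> real) \<Rightarrow> (nat \<Rightarrow> real) \<Rightarrow> nat \<Rightarrow> real" where
  "SS p a k = a 0 + (\<Sum>j=1..k. a j / p j)"

lemma SS_0[simp]: "SS p a 0 = a 0" by (simp add: SS_def)
lemma SS_Suc[simp]: "SS p a (Suc k) = SS p a k + a (Suc k) / p (Suc k)"
  by (simp add: SS_def)

locale surv_seq =
  fixes p :: "nat \<Rightarrow> real"
  assumes p0: "p 0 = 1" and ppos: "\<And>n. p n > 0" and pdec: "\<And>n. p (Suc n) \<le> p n"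
    and plim: "p \<longlonglongrightarrow> 0"
begin

definition q where "q k = p k - p (Suc k)"

lemma q_nonneg: "q k \<ge> 0" using pdec[of k] by (simp add: q_def)

lemma q_tail: "(\<lambda>k. q (k + n)) sums p n"
proof -
  have "(\<lambda>N. \<Sum>k<N. q (k + n)) = (\<lambda>N. p n - p (N + n))"
  proof
    fix N show "(\<Sum>k<N. q (k + n)) = p n - p (N + n)"
      by (induction N) (auto simp: q_def)
  qed
  moreover have "(\<lambda>N. p n - p (N + n)) \<longlonglongrightarrow> p n - 0"
    by (intro tendsto_diff tendsto_const) (rule LIMSEQ_ignore_initial_segment[OF plim])
  ultimately show ?thesis by (simp add: sums_def)
qed

lemma q_sums1: "q sums 1" using q_tail[of 0] p0 by simp

lemma abel1: "(\<Sum>k\<le>N. q k * SS p a k) = (\<Sum>j\<le>N. a j) - p (Suc N) * SS p a N"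
proof (induction N)
  case 0 then show ?case by (simp add: q_def p0 algebra_simps)
next
  case (Suc N)
  have "p (Suc N) > 0" by (rule ppos)
  then show ?case using Suc by (simp add: q_def algebra_simps)
qed

lemma abel2: "(\<Sum>k\<le>N. q k * (SS p a k)\<^sup>2) = (a 0)\<^sup>2
   + (\<Sum>n<N. (a (Suc n))\<^sup>2 / p (Suc n) + 2 * (a (Suc n) * SS p a n)) - p (Suc N) * (SS p a N)\<^sup>2"
proof (induction N)
  case 0 then show ?case by (simp add: q_def p0 algebra_simps)
next
  case (Suc N)
  have "p (Suc N) > 0" by (rule ppos)
  then show ?case using Suc by (simp add: q_def algebra_simps power2_eq_square add_divide_distrib)
qed


lemma SS_nonneg: "(\<And>j. a j \<ge> 0) \<Longrightarrow> SS p a k \<ge> 0"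
  by (induction k) (auto intro!: add_nonneg_nonneg divide_nonneg_pos ppos)

lemma SS_mono: assumes "\<And>j. a j \<ge> 0" "n \<le> m" shows "SS p a n \<le> SS p a m"
proof -
  have "incseq (SS p a)"
    by (rule incseq_SucI) (use assms(1) ppos in \<open>auto intro!: divide_nonneg_pos\<close>)
  then show ?thesis using assms(2) by (simp add: incseq_def)
qed

lemma SS_abs: "\<bar>SS p a k\<bar> \<le> SS p (\<lambda>j. \<bar>a j\<bar>) k"
proof (induction k)
  case (Suc k)
  have "\<bar>a (Suc k) / p (Suc k)\<bar> = \<bar>a (Suc k)\<bar> / p (Suc k)" using ppos[of "Suc k"] by (simp add: abs_divide)
  then have "\<bar>SS p a k + a (Suc k) / p (Suc k)\<bar> \<le> \<bar>SS p a k\<bar> + \<bar>a (Suc k)\<bar> / p (Suc k)"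
    using abs_triangle_ineq[of "SS p a k" "a (Suc k) / p (Suc k)"] by linarith
  then show ?case using Suc by simp
qed simp

lemma nonneg_case:
  assumes nn: "\<And>j. a j \<ge> 0" and sa: "summable a"
  shows "summable (\<lambda>k. q k * SS p a k)" and "(\<lambda>N. p (Suc N) * SS p a N) \<longlonglongrightarrow> 0"
proof -
  show sm: "summable (\<lambda>k. q k * SS p a k)"
  proof (rule bounded_imp_summable)
    show "0 \<le> q k * SS p a k" for k using q_nonneg SS_nonneg[OF nn] by simp
    show "(\<Sum>k\<le>n. q k * SS p a k) \<le> suminf a" for n
    proof -
      have "(\<Sum>k\<le>n. q k * SS p a k) \<le> (\<Sum>j\<le>n. a j)"
        unfolding abel1 using ppos[of "Suc n"] SS_nonneg[OF nn, where k=n] by simp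
      also have "\<dots> \<le> suminf a" using sa nn by (intro sum_le_suminf) auto
      finally show ?thesis .
    qed
  qed
  have le: "p (Suc N) * SS p a N \<le> (\<Sum>i. q (i + Suc N) * SS p a (i + Suc N))" for N
  proof -
    have mo: "SS p a N \<le> SS p a (i + Suc N)" for i by (rule SS_mono[OF nn]) simp
    have "(\<lambda>i. q (i + Suc N) * SS p a N) sums (p (Suc N) * SS p a N)"
      using q_tail[of "Suc N"] by (rule sums_mult2)
    then have "p (Suc N) * SS p a N = (\<Sum>i. q (i + Suc N) * SS p a N)" by (simp add: sums_iff)
    also have "\<dots> \<le> (\<Sum>i. q (i + Suc N) * SS p a (i + Suc N))"
      using mo \<open>(\<lambda>i. q (i + Suc N) * SS p a N) sums _\<close> summable_ignore_initial_segment[OF sm, of "Suc N"]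
      by (intro suminf_le) (auto simp: sums_iff simp del: SS_Suc intro!: mult_left_mono q_nonneg)
    finally show ?thesis .
  qed
  have t: "(\<lambda>N. \<Sum>i. q (i + Suc N) * SS p a (i + Suc N)) \<longlonglongrightarrow> 0"
    using LIMSEQ_Suc[OF suminf_exist_split2[OF sm]] by simp
  show "(\<lambda>N. p (Suc N) * SS p a N) \<longlonglongrightarrow> 0"
    by (rule real_tendsto_sandwich[OF _ _ tendsto_const t])
       (use le in \<open>auto intro!: always_eventually mult_nonneg_nonneg SS_nonneg nn less_imp_le[OF ppos] simp del: SS_Suc\<close>)
qed

lemma mean_case:
  assumes sa: "summable (\<lambda>j. \<bar>a j\<bar>)"
  shows "summable (\<lambda>k. q k * \<bar>SS p a k\<bar>)" and "(\<lambda>k. q k * SS p a k) sums suminf a"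
proof -
  note nc = nonneg_case[of "\<lambda>j. \<bar>a j\<bar>", OF abs_ge_zero sa]
  show "summable (\<lambda>k. q k * \<bar>SS p a k\<bar>)"
    by (rule summable_comparison_test[OF _ nc(1)])
       (auto intro!: exI[of _ 0] mult_left_mono SS_abs q_nonneg simp: abs_mult abs_of_nonneg[OF q_nonneg])
  have z: "(\<lambda>N. p (Suc N) * SS p a N) \<longlonglongrightarrow> 0"
  proof (rule Lim_null_comparison[OF _ nc(2)])
    show "\<forall>\<^sub>F N in sequentially. norm (p (Suc N) * SS p a N) \<le> p (Suc N) * SS p (\<lambda>j. \<bar>a j\<bar>) N"
    proof (intro always_eventually allI)
      fix N
      have "norm (p (Suc N) * SS p a N) = p (Suc N) * \<bar>SS p a N\<bar>"
        using ppos[of "Suc N"] by (simp add: abs_mult)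
      also have "\<dots> \<le> p (Suc N) * SS p (\<lambda>j. \<bar>a j\<bar>) N"
        using ppos[of "Suc N"] by (intro mult_left_mono SS_abs) simp
      finally show "norm (p (Suc N) * SS p a N) \<le> p (Suc N) * SS p (\<lambda>j. \<bar>a j\<bar>) N" .
    qed
  qed
  have sa': "summable a" using sa by (rule summable_rabs_cancel)
  have "(\<lambda>N. (\<Sum>j\<le>N. a j) - p (Suc N) * SS p a N) \<longlonglongrightarrow> suminf a - 0"
    by (intro tendsto_diff z summable_LIMSEQ'[OF sa'])
  then show "(\<lambda>k. q k * SS p a k) sums suminf a" unfolding sums_def_le abel1 by simp
qed

lemma ln_arg:
  assumes nn: "\<And>k. f k \<ge> 0" and sm: "summable (\<lambda>k. q k * f k)"
    and lim: "(\<lambda>N. p (Suc N) * f N) \<longlonglongrightarrow> L"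
  shows "L = 0"
proof (rule ccontr)
  assume "L \<noteq> 0"
  have "L \<ge> 0" by (rule tendsto_lowerbound[OF lim]) (auto intro!: always_eventually mult_nonneg_nonneg nn less_imp_le[OF ppos])
  with \<open>L \<noteq> 0\<close> have Lp: "L > 0" by simp
  define c where "c = L / 2"
  have cp: "c > 0" using Lp by (simp add: c_def)
  have "\<forall>\<^sub>F N in sequentially. p (Suc N) * f N > c"
    using lim Lp by (intro order_tendstoD(1)) (auto simp: c_def)
  then obtain K where K: "\<And>N. N \<ge> K \<Longrightarrow> p (Suc N) * f N > c" by (auto simp: eventually_sequentially)
  define B where "B = suminf (\<lambda>k. q k * f k)"
  have step: "q k * f k \<ge> c * (ln (p k) - ln (p (Suc k)))" if "k \<ge> K" for k
  proof -
    have pk: "p k > 0" "p (Suc k) > 0" by (rule ppos)+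
    have "f k \<ge> c / p (Suc k)" using K[OF that] pk by (simp add: field_simps)
    hence "q k * f k \<ge> q k * (c / p (Suc k))" by (intro mult_left_mono q_nonneg)
    moreover have "q k * (c / p (Suc k)) = c * (p k / p (Suc k) - 1)"
      using pk by (simp add: q_def field_simps)
    moreover have "ln (p k / p (Suc k)) \<le> p k / p (Suc k) - 1" using pk by (intro ln_le_minus_one) simp
    moreover have "ln (p k / p (Suc k)) = ln (p k) - ln (p (Suc k))" using pk by (simp add: ln_div)
    ultimately show ?thesis using cp by (smt (verit) mult_left_mono)
  qed
  have bnd: "ln (p N) \<ge> ln (p K) - B / c" if "N \<ge> K" for N
  proof -
    have "c * (ln (p K) - ln (p N)) = (\<Sum>k=K..<N. c * (ln (p k) - ln (p (Suc k))))"
      using sum_Suc_diff'[OF that, of "\<lambda>k. - ln (p k)"] by (simp add: sum_distrib_left[symmetric])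
    also have "\<dots> \<le> (\<Sum>k=K..<N. q k * f k)" by (intro sum_mono step) simp
    also have "\<dots> \<le> B" unfolding B_def using sm by (intro sum_le_suminf) (auto intro!: mult_nonneg_nonneg q_nonneg nn)
    finally show ?thesis using cp by (simp add: field_simps)
  qed
  have "filterlim (\<lambda>N. ln (p N)) at_bot sequentially"
  proof (rule filterlim_compose[OF ln_at_0])
    show "filterlim p (at_right 0) sequentially"
      using plim ppos by (intro tendsto_imp_filterlim_at_right) (auto intro!: always_eventually)
  qed
  hence "\<forall>\<^sub>F N in sequentially. ln (p N) < ln (p K) - B / c"
    by (simp add: filterlim_at_bot_dense)
  then obtain N0 where "\<And>N. N \<ge> N0 \<Longrightarrow> ln (p N) < ln (p K) - B / c"
    by (auto simp: eventually_sequentially)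
  from this[of "max N0 K"] bnd[of "max N0 K"] show False by simp
qed

end

definition U :: "(nat \<Rightarrow> real) \<Rightarrow> nat \<Rightarrow> real" where
  "U a m = (SUP j\<in>{m..}. \<bar>\<Sum>l=m..j. a l\<bar>)"

lemma U_upper:
  assumes sa: "summable (\<lambda>j. \<bar>a j\<bar>)" and "j \<ge> m"
  shows "\<bar>\<Sum>l=m..j. a l\<bar> \<le> U a m"
proof -
  have "bdd_above ((\<lambda>j. \<bar>\<Sum>l=m..j. a l\<bar>) ` {m..})"
  proof (rule bdd_aboveI2)
    fix j
    have "\<bar>\<Sum>l=m..j. a l\<bar> \<le> (\<Sum>l=m..j. \<bar>a l\<bar>)" by (rule sum_abs)
    also have "\<dots> \<le> (\<Sum>l. \<bar>a l\<bar>)" using sa by (intro sum_le_suminf) auto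
    finally show "\<bar>\<Sum>l=m..j. a l\<bar> \<le> (\<Sum>l. \<bar>a l\<bar>)" .
  qed
  then show ?thesis unfolding U_def using assms(2) by (intro cSUP_upper) auto
qed

lemma U_ge: "summable (\<lambda>j. \<bar>a j\<bar>) \<Longrightarrow> \<bar>a m\<bar> \<le> U a m"
  using U_upper[of a m m] by simp

lemma sum_shift_aux: "j \<le> N \<Longrightarrow> (\<Sum>n=j..<N. a (Suc n)) + a j = (\<Sum>l=j..N. (a::nat\<Rightarrow>real) l)"
proof (induction N)
  case (Suc N) then show ?case by (cases "j = Suc N") (auto simp: le_Suc_eq algebra_simps)
qed simp

context surv_seq begin

lemma SS_eq: "SS p a n = (\<Sum>j\<le>n. a j / p j)"
  by (induction n) (auto simp: p0)

lemma swap_sum: "(\<Sum>n<N. a (Suc n) * SS p a n) = (\<Sum>j<N. a j / p j * (\<Sum>n=j..<N. a (Suc n)))"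
proof (induction N)
  case (Suc N)
  have "(\<Sum>j<Suc N. a j / p j * (\<Sum>n=j..<Suc N. a (Suc n)))
      = (\<Sum>j<N. a j / p j * ((\<Sum>n=j..<N. a (Suc n)) + a (Suc N))) + a N / p N * a (Suc N)"
    by (simp add: sum.atLeastLessThan_Suc)
  also have "\<dots> = (\<Sum>j<N. a j / p j * (\<Sum>n=j..<N. a (Suc n))) + a (Suc N) * (\<Sum>j\<le>N. a j / p j)"
    by (simp add: algebra_simps sum.distrib sum_distrib_left sum_distrib_right lessThan_Suc_atMost[symmetric])
  finally show ?case using Suc by (simp add: SS_eq)
qed simp

lemma second_moment:
  assumes sa: "summable (\<lambda>j. \<bar>a j\<bar>)"
    and H: "summable (\<lambda>n. \<bar>a (Suc n)\<bar> / p (Suc n) * U a (Suc n))"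
  shows "summable (\<lambda>n. (a (Suc n))\<^sup>2 / p (Suc n))"
    and "summable (\<lambda>n. a (Suc n) * SS p a n)"
    and "(\<lambda>k. q k * (SS p a k)\<^sup>2) sums ((a 0)\<^sup>2 + (\<Sum>n. (a (Suc n))\<^sup>2 / p (Suc n))
            + 2 * (\<Sum>n. a (Suc n) * SS p a n))"
proof -
  show sx: "summable (\<lambda>n. (a (Suc n))\<^sup>2 / p (Suc n))"
  proof (rule summable_comparison_test[OF _ H])
    show "\<exists>N. \<forall>n\<ge>N. norm ((a (Suc n))\<^sup>2 / p (Suc n)) \<le> \<bar>a (Suc n)\<bar> / p (Suc n) * U a (Suc n)"
    proof (intro exI allI impI)
      fix n
      have pp: "p (Suc n) > 0" by (rule ppos)
      have "norm ((a (Suc n))\<^sup>2 / p (Suc n)) = \<bar>a (Suc n)\<bar> / p (Suc n) * \<bar>a (Suc n)\<bar>"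
        using pp by (simp add: power2_eq_square abs_mult)
      also have "\<dots> \<le> \<bar>a (Suc n)\<bar> / p (Suc n) * U a (Suc n)"
        using pp U_ge[OF sa] by (intro mult_left_mono) auto
      finally show "norm ((a (Suc n))\<^sup>2 / p (Suc n)) \<le> \<bar>a (Suc n)\<bar> / p (Suc n) * U a (Suc n)" .
    qed
  qed
  define A where "A j N = (if j < N then a j / p j * (\<Sum>n=j..<N. a (Suc n)) else 0)" for j N
  define b where "b j = a j / p j * ((\<Sum>n. a (Suc n)) - (\<Sum>n<j. a (Suc n)))" for j
  define Mb where "Mb j = 2 * (\<bar>a j\<bar> / p j * U a j)" for j
  have sas: "summable (\<lambda>n. a (Suc n))"
    using summable_rabs_cancel[OF sa] by (subst summable_Suc_iff)
  have lim: "(\<lambda>N. A j N) \<longlonglongrightarrow> b j" for j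
  proof -
    have "(\<lambda>N. a j / p j * ((\<Sum>n<N. a (Suc n)) - (\<Sum>n<j. a (Suc n)))) \<longlonglongrightarrow> b j"
      unfolding b_def by (intro tendsto_intros summable_LIMSEQ[OF sas])
    moreover have "\<forall>\<^sub>F N in sequentially. a j / p j * ((\<Sum>n<N. a (Suc n)) - (\<Sum>n<j. a (Suc n))) = A j N"
    proof (rule eventually_sequentiallyI[of "Suc j"])
      fix N assume "Suc j \<le> N"
      then have "(\<Sum>n<N. a (Suc n)) = (\<Sum>n<j. a (Suc n)) + (\<Sum>n=j..<N. a (Suc n))"
        by (simp add: lessThan_atLeast0 sum.atLeastLessThan_concat)
      then show "a j / p j * ((\<Sum>n<N. a (Suc n)) - (\<Sum>n<j. a (Suc n))) = A j N"
        using \<open>Suc j \<le> N\<close> by (simp add: A_def)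
    qed
    ultimately show ?thesis by (rule Lim_transform_eventually)
  qed
  have bound: "norm (A j N) \<le> Mb j" for j N
  proof (cases "j < N")
    case True
    have pp: "p j > 0" by (rule ppos)
    have "\<bar>\<Sum>n=j..<N. a (Suc n)\<bar> = \<bar>(\<Sum>l=j..N. a l) - a j\<bar>"
      using sum_shift_aux[of j N a] True by simp
    also have "\<dots> \<le> U a j + \<bar>a j\<bar>" using U_upper[OF sa, of j N] True by linarith
    also have "\<dots> \<le> 2 * U a j" using U_ge[OF sa, of j] by simp
    finally have h: "\<bar>\<Sum>n=j..<N. a (Suc n)\<bar> \<le> 2 * U a j" .
    have "norm (A j N) = \<bar>a j\<bar> / p j * \<bar>\<Sum>n=j..<N. a (Suc n)\<bar>"
      using True pp by (simp add: A_def abs_mult)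
    also have "\<dots> \<le> \<bar>a j\<bar> / p j * (2 * U a j)" using h pp by (intro mult_left_mono) auto
    finally show ?thesis by (simp add: Mb_def field_simps)
  next
    case False
    have "0 \<le> U a j" using U_ge[OF sa, of j] by linarith
    then show ?thesis using False ppos[of j] by (simp add: A_def Mb_def)
  qed
  have sMb: "summable Mb"
    unfolding Mb_def by (intro summable_mult) (subst summable_Suc_iff[symmetric], rule H)
  have T: "(\<lambda>N. suminf (\<lambda>j. A j N)) \<longlonglongrightarrow> suminf b"
    using tannerys_theorem[of "\<lambda>j N. A j N" b sequentially Mb, OF lim _ sMb] bound
    by (auto intro!: always_eventually)
  have "suminf (\<lambda>j. A j N) = (\<Sum>n<N. a (Suc n) * SS p a n)" for N
    by (subst suminf_finite[of "{..<N}"]) (auto simp: A_def swap_sum)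
  with T have ys: "(\<lambda>n. a (Suc n) * SS p a n) sums suminf b" by (simp add: sums_def)
  then show sy: "summable (\<lambda>n. a (Suc n) * SS p a n)" by (rule sums_summable)
  define Ainf where "Ainf = (a 0)\<^sup>2 + (\<Sum>n. (a (Suc n))\<^sup>2 / p (Suc n)) + 2 * (\<Sum>n. a (Suc n) * SS p a n)"
  define AN where "AN N = (a 0)\<^sup>2 + (\<Sum>n<N. (a (Suc n))\<^sup>2 / p (Suc n) + 2 * (a (Suc n) * SS p a n))" for N
  have sxy: "summable (\<lambda>n. (a (Suc n))\<^sup>2 / p (Suc n) + 2 * (a (Suc n) * SS p a n))"
    using sx sy by (intro summable_add summable_mult)
  have AN: "AN \<longlonglongrightarrow> Ainf"
  proof -
    have "AN \<longlonglongrightarrow> (a 0)\<^sup>2 + (\<Sum>n. (a (Suc n))\<^sup>2 / p (Suc n) + 2 * (a (Suc n) * SS p a n))"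
      unfolding AN_def by (intro tendsto_add tendsto_const summable_LIMSEQ sxy)
    also have "(\<Sum>n. (a (Suc n))\<^sup>2 / p (Suc n) + 2 * (a (Suc n) * SS p a n)) =
        (\<Sum>n. (a (Suc n))\<^sup>2 / p (Suc n)) + 2 * (\<Sum>n. a (Suc n) * SS p a n)"
      using sx sy by (simp add: suminf_add[symmetric] suminf_mult[symmetric] summable_mult)
    finally show ?thesis by (simp add: Ainf_def add.assoc)
  qed
  obtain B where B: "\<And>N. norm (AN N) \<le> B"
    using convergent_imp_Bseq[of AN] AN by (auto simp: Bseq_def convergent_def)
  have nnE: "0 \<le> q k * (SS p a k)\<^sup>2" for k using q_nonneg by simp
  have ab: "(\<Sum>k\<le>N. q k * (SS p a k)\<^sup>2) = AN N - p (Suc N) * (SS p a N)\<^sup>2" for N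
    unfolding abel2 AN_def by simp
  have sE: "summable (\<lambda>k. q k * (SS p a k)\<^sup>2)"
  proof (rule bounded_imp_summable[OF nnE])
    fix N
    have "(\<Sum>k\<le>N. q k * (SS p a k)\<^sup>2) \<le> AN N" unfolding ab using ppos[of "Suc N"] by simp
    also have "\<dots> \<le> B" using B[of N] by simp
    finally show "(\<Sum>k\<le>N. q k * (SS p a k)\<^sup>2) \<le> B" .
  qed
  have "(\<lambda>N. AN N - (\<Sum>k\<le>N. q k * (SS p a k)\<^sup>2)) \<longlonglongrightarrow> Ainf - suminf (\<lambda>k. q k * (SS p a k)\<^sup>2)"
    by (intro tendsto_diff AN summable_LIMSEQ'[OF sE])
  hence "(\<lambda>N. p (Suc N) * (SS p a N)\<^sup>2) \<longlonglongrightarrow> Ainf - suminf (\<lambda>k. q k * (SS p a k)\<^sup>2)"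
    by (simp add: ab)
  from ln_arg[of "\<lambda>k. (SS p a k)\<^sup>2", OF _ sE this] have "Ainf = suminf (\<lambda>k. q k * (SS p a k)\<^sup>2)" by simp
  then show "(\<lambda>k. q k * (SS p a k)\<^sup>2) sums ((a 0)\<^sup>2 + (\<Sum>n. (a (Suc n))\<^sup>2 / p (Suc n))
            + 2 * (\<Sum>n. a (Suc n) * SS p a n))"
    using sE by (simp add: Ainf_def summable_sums)
qed

end


context surv_seq begin

lemma infinite_case:
  assumes nn: "\<And>j. a j \<ge> 0" and sE: "summable (\<lambda>k. q k * (SS p a k)\<^sup>2)"
  shows "summable (\<lambda>n. a (Suc n) * SS p a n)"
proof (rule bounded_imp_summable)
  show "0 \<le> a (Suc n) * SS p a n" for n using nn SS_nonneg[OF nn] by simp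
  define f where "f k = q k * (SS p a k)\<^sup>2" for k
  have tl: "p (Suc M) * (SS p a M)\<^sup>2 \<le> (\<Sum>i. f (i + Suc M))" for M
  proof -
    have mo: "(SS p a M)\<^sup>2 \<le> (SS p a (i + Suc M))\<^sup>2" for i
      using SS_mono[OF nn, of M "i + Suc M"] SS_nonneg[OF nn, where k=M] by (intro power_mono) auto
    have sm: "(\<lambda>i. q (i + Suc M) * (SS p a M)\<^sup>2) sums (p (Suc M) * (SS p a M)\<^sup>2)"
      using q_tail[of "Suc M"] by (rule sums_mult2)
    then have "p (Suc M) * (SS p a M)\<^sup>2 = (\<Sum>i. q (i + Suc M) * (SS p a M)\<^sup>2)" by (simp add: sums_iff)
    also have "\<dots> \<le> (\<Sum>i. f (i + Suc M))"
      using mo sm summable_ignore_initial_segment[OF sE, of "Suc M"] unfolding f_def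
      by (intro suminf_le) (auto simp: sums_iff simp del: SS_Suc intro!: mult_left_mono q_nonneg)
    finally show ?thesis .
  qed
  have snn: "0 \<le> SS p a k" for k by (rule SS_nonneg) (rule nn)
  fix N
  have "(\<Sum>k\<le>N. a (Suc k) * SS p a k) \<le> (\<Sum>n<Suc N. (a (Suc n))\<^sup>2 / p (Suc n) + 2 * (a (Suc n) * SS p a n))"
    unfolding lessThan_Suc_atMost
  proof (intro sum_mono)
    fix k
    have "0 \<le> (a (Suc k))\<^sup>2 / p (Suc k)" using ppos[of "Suc k"] by simp
    moreover have "0 \<le> a (Suc k) * SS p a k" using nn snn by simp
    ultimately show "a (Suc k) * SS p a k \<le> (a (Suc k))\<^sup>2 / p (Suc k) + 2 * (a (Suc k) * SS p a k)" by linarith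
  qed
  also have "\<dots> = (\<Sum>k\<le>Suc N. f k) - (a 0)\<^sup>2 + p (Suc (Suc N)) * (SS p a (Suc N))\<^sup>2"
    unfolding f_def abel2 by simp
  also have "\<dots> \<le> (\<Sum>k<Suc (Suc N). f k) + (\<Sum>i. f (i + Suc (Suc N)))"
    using tl[of "Suc N"] zero_le_power2[of "a 0"] by (simp only: lessThan_Suc_atMost)
  also have "\<dots> = suminf f"
  proof -
    have sf: "summable f" using sE by (simp add: f_def[abs_def])
    show ?thesis using suminf_split_initial_segment[OF sf, of "Suc (Suc N)"] by linarith
  qed
  finally show "(\<Sum>k\<le>N. a (Suc k) * SS p a k) \<le> suminf f" .
qed

end


locale rr_setup = prob_space M for M :: "'a measure" +
  fixes \<tau> :: "'a \<Rightarrow> nat"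
  assumes tmeas[measurable]: "\<tau> \<in> measurable M (count_space UNIV)"
    and spos: "\<And>n. surv M \<tau> n > 0"
begin

lemma sets_ge[measurable]: "{\<omega> \<in> space M. k \<le> \<tau> \<omega>} \<in> sets M"
  by measurable

lemma sets_eq[measurable]: "{\<omega> \<in> space M. \<tau> \<omega> = k} \<in> sets M"
  by measurable

lemma surv_seq: "surv_seq (surv M \<tau>)"
proof
  show "surv M \<tau> 0 = 1" by (simp add: surv_def prob_space)
  show "0 < surv M \<tau> n" for n by (rule spos)
  show "surv M \<tau> (Suc n) \<le> surv M \<tau> n" for n
    unfolding surv_def by (intro finite_measure_mono) auto
  have "(\<lambda>n. measure M {\<omega> \<in> space M. n \<le> \<tau> \<omega>}) \<longlonglongrightarrow> measure M (\<Inter>n. {\<omega> \<in> space M. n \<le> \<tau> \<omega>})"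
    by (rule finite_Lim_measure_decseq) (auto simp: decseq_def)
  moreover have "(\<Inter>n. {\<omega> \<in> space M. n \<le> \<tau> \<omega>}) = {}"
    by auto (metis Suc_n_not_le_n)
  ultimately show "surv M \<tau> \<longlonglongrightarrow> 0" by (simp add: surv_def[abs_def])
qed

sublocale S: surv_seq "surv M \<tau>" by (rule surv_seq)

lemma measure_eq: "measure M {\<omega> \<in> space M. \<tau> \<omega> = k} = S.q k"
proof -
  have "{\<omega> \<in> space M. \<tau> \<omega> = k} = {\<omega> \<in> space M. k \<le> \<tau> \<omega>} - {\<omega> \<in> space M. Suc k \<le> \<tau> \<omega>}"
    by auto
  then show ?thesis
    by (simp add: S.q_def surv_def finite_measure_Diff[OF sets_ge sets_ge] Collect_mono_iff)
qed

lemma distr_eq: "distr M (count_space UNIV) \<tau> = density (count_space UNIV) (\<lambda>k. ennreal (S.q k))"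
proof (rule measure_eqI_countable[where A=UNIV])
  fix k :: nat
  have "emeasure (distr M (count_space UNIV) \<tau>) {k} = emeasure M {\<omega> \<in> space M. \<tau> \<omega> = k}"
    by (subst emeasure_distr) (auto intro!: arg_cong[where f="emeasure M"])
  also have "\<dots> = ennreal (S.q k)" by (simp add: emeasure_eq_measure measure_eq)
  also have "\<dots> = emeasure (density (count_space UNIV) (\<lambda>k. ennreal (S.q k))) {k}"
    by (subst emeasure_density) auto
  finally show "emeasure (distr M (count_space UNIV) \<tau>) {k} = emeasure (density (count_space UNIV) (\<lambda>k. ennreal (S.q k))) {k}" .
qed auto

lemma nn_formula: "(\<integral>\<^sup>+ \<omega>. ennreal (h (\<tau> \<omega>)) \<partial>M) = (\<Sum>k. ennreal (S.q k * h k))"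
proof -
  have "(\<integral>\<^sup>+ \<omega>. ennreal (h (\<tau> \<omega>)) \<partial>M) = (\<integral>\<^sup>+ k. ennreal (h k) \<partial>distr M (count_space UNIV) \<tau>)"
    by (subst nn_integral_distr) auto
  also have "\<dots> = (\<integral>\<^sup>+ k. ennreal (S.q k) * ennreal (h k) \<partial>count_space UNIV)"
    unfolding distr_eq by (subst nn_integral_density) auto
  also have "\<dots> = (\<Sum>k. ennreal (S.q k * h k))"
    by (subst nn_integral_count_space_nat) (simp add: ennreal_mult'[OF S.q_nonneg])
  finally show ?thesis .
qed

lemma int_formula:
  assumes "summable (\<lambda>k. S.q k * \<bar>h k\<bar>)"
  shows "integral\<^sup>L M (\<lambda>\<omega>. h (\<tau> \<omega>)) = (\<Sum>k. S.q k * h k)"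
proof -
  have i: "integrable (count_space UNIV) (\<lambda>k. S.q k *\<^sub>R h k)"
    using assms by (simp add: integrable_count_space_nat_iff abs_mult abs_of_nonneg S.q_nonneg)
  have "integral\<^sup>L M (\<lambda>\<omega>. h (\<tau> \<omega>)) = integral\<^sup>L (distr M (count_space UNIV) \<tau>) h"
    by (subst integral_distr) auto
  also have "\<dots> = integral\<^sup>L (count_space UNIV) (\<lambda>k. S.q k *\<^sub>R h k)"
    unfolding distr_eq
    by (subst integral_density) (auto simp: S.q_nonneg)
  also have "\<dots> = (\<Sum>k. S.q k * h k)" using integral_count_space_nat[OF i] by simp
  finally show ?thesis .
qed

end


lemma sq_ineq: "(x::real)\<^sup>2 \<le> 2 * (x - c)\<^sup>2 + 2 * c\<^sup>2"
proof -
  have "2 * (x - c)\<^sup>2 + 2 * c\<^sup>2 - x\<^sup>2 = (x - 2 * c)\<^sup>2" by (simp add: power2_eq_square algebra_simps)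
  then show ?thesis using zero_le_power2[of "x - 2 * c"] by linarith
qed

lemma sq_expand: "(q::real) * x\<^sup>2 - 2 * c * (q * x) + c\<^sup>2 * q = q * (x - c)\<^sup>2"
  by (simp add: power2_eq_square algebra_simps)

theorem proposition2:
  fixes M :: "'a measure" and \<tau> :: "'a \<Rightarrow> nat" and \<alpha> :: "nat \<Rightarrow> real"
  assumes "prob_space M"
    and "\<tau> \<in> measurable M (count_space UNIV)"
    and "\<And>n. surv M \<tau> n > 0"
    and "summable (\<lambda>k. \<bar>\<alpha> k\<bar>)"
  shows
    "(summable (\<lambda>n. \<bar>\<alpha> (Suc n)\<bar> / surv M \<tau> (Suc n)
          * (SUP j\<in>{Suc n..}. \<bar>\<Sum>l=Suc n..j. \<alpha> l\<bar>))
      \<longrightarrow> ext_variance M (rr_est M \<tau> \<alpha>) < \<infinity>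
        \<and> summable (\<lambda>n. (\<alpha> (Suc n))\<^sup>2 / surv M \<tau> (Suc n))
        \<and> summable (\<lambda>n. \<alpha> (Suc n) * wpsum M \<tau> \<alpha> n)
        \<and> enn2real (ext_variance M (rr_est M \<tau> \<alpha>)) =
            (\<alpha> 0)\<^sup>2 + (\<Sum>n. (\<alpha> (Suc n))\<^sup>2 / surv M \<tau> (Suc n))
            + 2 * (\<Sum>n. \<alpha> (Suc n) * wpsum M \<tau> \<alpha> n) - (\<Sum>k. \<alpha> k)\<^sup>2)
     \<and> (((\<forall>n. \<alpha> n \<ge> 0) \<and> \<not> summable (\<lambda>n. \<alpha> (Suc n) * wpsum M \<tau> \<alpha> n))
      \<longrightarrow> ext_variance M (rr_est M \<tau> \<alpha>) = \<infinity>)"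
proof -
  interpret R: rr_setup M \<tau>
    using assms(1-3) by (simp add: rr_setup_def rr_setup_axioms_def)
  let ?p = "surv M \<tau>"
  have wp: "wpsum M \<tau> \<alpha> = SS ?p \<alpha>" by (simp add: wpsum_def SS_def fun_eq_iff)
  have est: "rr_est M \<tau> \<alpha> = (\<lambda>\<omega>. SS ?p \<alpha> (\<tau> \<omega>))" by (simp add: rr_est_def wp fun_eq_iff)
  have ev: "ext_variance M (rr_est M \<tau> \<alpha>) = (\<Sum>k. ennreal (R.S.q k * (SS ?p \<alpha> k - c)\<^sup>2))"
    if "c = integral\<^sup>L M (rr_est M \<tau> \<alpha>)" for c
    unfolding ext_variance_def that[symmetric]
    by (simp only: est) (rule R.nn_formula[of "\<lambda>k. (SS ?p \<alpha> k - c)\<^sup>2"])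
  define c where "c = integral\<^sup>L M (rr_est M \<tau> \<alpha>)"
  note ev = ev[OF c_def]
  have sq1: "summable R.S.q" using R.S.q_sums1 by (rule sums_summable)
  show ?thesis
  proof (intro conjI impI)
    assume H0: "summable (\<lambda>n. \<bar>\<alpha> (Suc n)\<bar> / surv M \<tau> (Suc n)
          * (SUP j\<in>{Suc n..}. \<bar>\<Sum>l=Suc n..j. \<alpha> l\<bar>))"
    have H: "summable (\<lambda>n. \<bar>\<alpha> (Suc n)\<bar> / ?p (Suc n) * U \<alpha> (Suc n))"
      using H0 by (simp add: U_def)
    note sm = R.S.second_moment[OF assms(4) H]
    note mc = R.S.mean_case[OF assms(4)]
    have cval: "c = (\<Sum>k. \<alpha> k)"
      unfolding c_def est using R.int_formula[OF mc(1)] mc(2) by (simp add: sums_iff)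
    define Ainf where "Ainf = (\<alpha> 0)\<^sup>2 + (\<Sum>n. (\<alpha> (Suc n))\<^sup>2 / ?p (Suc n)) + 2 * (\<Sum>n. \<alpha> (Suc n) * SS ?p \<alpha> n)"
    have "(\<lambda>k. R.S.q k * (SS ?p \<alpha> k)\<^sup>2 - 2 * c * (R.S.q k * SS ?p \<alpha> k) + c\<^sup>2 * R.S.q k)
           sums (Ainf - 2 * c * c + c\<^sup>2 * 1)"
    proof -
      have m: "(\<lambda>k. R.S.q k * SS ?p \<alpha> k) sums c" using mc(2) by (simp add: cval)
      have "(\<lambda>k. R.S.q k * (SS ?p \<alpha> k)\<^sup>2 - 2 * c * (R.S.q k * SS ?p \<alpha> k)) sums (Ainf - 2 * c * c)"
        using sums_diff[OF sm(3) sums_mult[OF m, of "2 * c"]] by (simp add: Ainf_def)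
      from sums_add[OF this sums_mult[OF R.S.q_sums1, of "c\<^sup>2"]] show ?thesis .
    qed
    moreover have "(\<lambda>k. R.S.q k * (SS ?p \<alpha> k)\<^sup>2 - 2 * c * (R.S.q k * SS ?p \<alpha> k) + c\<^sup>2 * R.S.q k)
        = (\<lambda>k. R.S.q k * (SS ?p \<alpha> k - c)\<^sup>2)"
      by (simp only: sq_expand)
    ultimately have vs: "(\<lambda>k. R.S.q k * (SS ?p \<alpha> k - c)\<^sup>2) sums (Ainf - c\<^sup>2)"
      by (simp add: power2_eq_square)
    have nnv: "0 \<le> R.S.q k * (SS ?p \<alpha> k - c)\<^sup>2" for k using R.S.q_nonneg by simp
    have "ext_variance M (rr_est M \<tau> \<alpha>) = ennreal (Ainf - c\<^sup>2)"
      unfolding ev using vs by (subst suminf_ennreal2[OF nnv]) (auto simp: sums_iff)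
    moreover have "0 \<le> Ainf - c\<^sup>2"
    proof -
      have "0 \<le> (\<Sum>k. R.S.q k * (SS ?p \<alpha> k - c)\<^sup>2)" by (rule suminf_nonneg[OF sums_summable[OF vs] nnv])
      then show ?thesis using sums_unique[OF vs] by simp
    qed
    ultimately have EV: "ext_variance M (rr_est M \<tau> \<alpha>) = ennreal (Ainf - c\<^sup>2)" "0 \<le> Ainf - c\<^sup>2" by auto
    show "ext_variance M (rr_est M \<tau> \<alpha>) < \<infinity>" unfolding EV(1) by simp
    have "enn2real (ext_variance M (rr_est M \<tau> \<alpha>)) = Ainf - c\<^sup>2" unfolding EV(1) using EV(2) by simp
    then show "enn2real (ext_variance M (rr_est M \<tau> \<alpha>)) =
            (\<alpha> 0)\<^sup>2 + (\<Sum>n. (\<alpha> (Suc n))\<^sup>2 / surv M \<tau> (Suc n))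
            + 2 * (\<Sum>n. \<alpha> (Suc n) * wpsum M \<tau> \<alpha> n) - (\<Sum>k. \<alpha> k)\<^sup>2"
      by (simp only: Ainf_def wp cval)
    show "summable (\<lambda>n. (\<alpha> (Suc n))\<^sup>2 / surv M \<tau> (Suc n))" by (rule sm(1))
    show "summable (\<lambda>n. \<alpha> (Suc n) * wpsum M \<tau> \<alpha> n)" using sm(2) by (simp add: wp)
  next
    assume A: "(\<forall>n. \<alpha> n \<ge> 0) \<and> \<not> summable (\<lambda>n. \<alpha> (Suc n) * wpsum M \<tau> \<alpha> n)"
    show "ext_variance M (rr_est M \<tau> \<alpha>) = \<infinity>"
    proof (rule ccontr)
      assume "ext_variance M (rr_est M \<tau> \<alpha>) \<noteq> \<infinity>"
      then have "summable (\<lambda>k. R.S.q k * (SS ?p \<alpha> k - c)\<^sup>2)"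
        unfolding ev using R.S.q_nonneg by (intro summable_suminf_not_top) auto
      then have s2: "summable (\<lambda>k. 2 * (R.S.q k * (SS ?p \<alpha> k - c)\<^sup>2) + 2 * c\<^sup>2 * R.S.q k)"
        using sq1 by (intro summable_add summable_mult)
      have "summable (\<lambda>k. R.S.q k * (SS ?p \<alpha> k)\<^sup>2)"
      proof (rule summable_comparison_test[OF _ s2], intro exI allI impI)
        fix k
        have "(SS ?p \<alpha> k)\<^sup>2 \<le> 2 * (SS ?p \<alpha> k - c)\<^sup>2 + 2 * c\<^sup>2"
          by (rule sq_ineq)
        then have "R.S.q k * (SS ?p \<alpha> k)\<^sup>2 \<le> R.S.q k * (2 * (SS ?p \<alpha> k - c)\<^sup>2 + 2 * c\<^sup>2)"
          by (intro mult_left_mono R.S.q_nonneg)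
        then show "norm (R.S.q k * (SS ?p \<alpha> k)\<^sup>2) \<le> 2 * (R.S.q k * (SS ?p \<alpha> k - c)\<^sup>2) + 2 * c\<^sup>2 * R.S.q k"
          using R.S.q_nonneg[of k] by (simp add: algebra_simps)
      qed
      from R.S.infinite_case[of \<alpha>, OF _ this] A show False by (auto simp: wp)
    qed
  qed
qed

end
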